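(* Let $G$ be a connected interval graph with a fixed interval representation in which all right endpoints are distinct, and let $V_2=\{w_1,\dots,w_{|V_2|}\}$ and $C_1,\dots,C_{|V_2|}$ be as defined in the context. Then for every dominating set $D$ of $G$ and every $i\in\{1,\dots,|V_2|\}$, $|D\cap C_i|\ge1$. Consequently (since $V_2\cap C_i=\{w_i\}$ and the $C_i$ partition $V(G)$), $V_2$ is a minimum dominating set of $G$.
   Context: $G$ is given by closed intervals $I_v=[l(v),r(v)]$, $v\in V(G)$, with $uv\in E(G)$ iff $I_u\cap I_v\ne\emptyset$. Labeling procedure, repeated until all vertices are labeled: (1) pick the unlabeled vertex $v_i$ with minimum $r$-value among unlabeled vertices and give it label 1; (2) let $v_j$ be the vertex of $N[v_i]$ with maximum $r$-value (possibly already labeled, possibly $v_j=v_i$) and (re)label $v_j$ with label 2; (3) give label 3 to every still unlabeled vertex of $N(v_j)$. $V_k$ is the set of vertices whose final label is $k$. Order $V_2$ as $w_1,\dots,w_{|V_2|}$ with $r(w_1)<\dots<r(w_{|V_2|})$. Define $C_1=\{v: r(v)\le r(w_1)\}$, $C_i=\{v: r(w_{i-1})<r(v)\le r(w_i)\}$ for $2\le i\le |V_2|-1$, and $C_{|V_2|}=\{v: r(w_{|V_2|-1})<r(v)\}$ (if $|V_2|=1$, $C_1=V(G)$). $N[v]$, $N(v)$ are closed and open neighbourhoods. A set $D$ is a dominating set if every vertex is in $D$ or adjacent to a vertex of $D$. *)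

theory Defs
  imports Complex_Main
begin

text \<open>Interval graph on a finite vertex set V, vertex v has interval [l v, r v].\<close>

definition adj :: "('a \<Rightarrow> real) \<Rightarrow> ('a \<Rightarrow> real) \<Rightarrow> 'a \<Rightarrow> 'a \<Rightarrow> bool" where
  "adj l r u v \<longleftrightarrow> u \<noteq> v \<and> l u \<le> r v \<and> l v \<le> r u"

definition closed_nbhd :: "'a set \<Rightarrow> ('a \<Rightarrow> real) \<Rightarrow> ('a \<Rightarrow> real) \<Rightarrow> 'a \<Rightarrow> 'a set" where
  "closed_nbhd V l r v = {u \<in> V. u = v \<or> adj l r u v}"

definition open_nbhd :: "'a set \<Rightarrow> ('a \<Rightarrow> real) \<Rightarrow> ('a \<Rightarrow> real) \<Rightarrow> 'a \<Rightarrow> 'a set" where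
  "open_nbhd V l r v = {u \<in> V. adj l r u v}"

definition connected_graph :: "'a set \<Rightarrow> ('a \<Rightarrow> real) \<Rightarrow> ('a \<Rightarrow> real) \<Rightarrow> bool" where
  "connected_graph V l r \<longleftrightarrow> V \<noteq> {} \<and>
     (\<forall>u\<in>V. \<forall>v\<in>V. (\<lambda>x y. x \<in> V \<and> y \<in> V \<and> adj l r x y)\<^sup>*\<^sup>* u v)"

definition dominating :: "'a set \<Rightarrow> ('a \<Rightarrow> real) \<Rightarrow> ('a \<Rightarrow> real) \<Rightarrow> 'a set \<Rightarrow> bool" where
  "dominating V l r D \<longleftrightarrow> D \<subseteq> V \<and> (\<forall>v\<in>V. v \<in> D \<or> (\<exists>u\<in>D. adj l r u v))"

definition min_dominating :: "'a set \<Rightarrow> ('a \<Rightarrow> real) \<Rightarrow> ('a \<Rightarrow> real) \<Rightarrow> 'a set \<Rightarrow> bool" where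
  "min_dominating V l r D \<longleftrightarrow> dominating V l r D \<and>
     (\<forall>D'. dominating V l r D' \<longrightarrow> card D \<le> card D')"

text \<open>One round of the labeling procedure. Labels: 0 = unlabeled, 1, 2, 3.\<close>
definition label_step :: "'a set \<Rightarrow> ('a \<Rightarrow> real) \<Rightarrow> ('a \<Rightarrow> real) \<Rightarrow> ('a \<Rightarrow> nat) \<Rightarrow> ('a \<Rightarrow> nat)" where
  "label_step V l r lab =
    (let U = {v \<in> V. lab v = 0} in
     if U = {} then lab else
     let vi = (THE v. v \<in> U \<and> (\<forall>u\<in>U. r v \<le> r u));
         lab1 = lab(vi := 1);
         vj = (THE v. v \<in> closed_nbhd V l r vi \<and> (\<forall>u\<in>closed_nbhd V l r vi. r u \<le> r v));
         lab2 = lab1(vj := 2)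
     in (\<lambda>u. if u \<in> open_nbhd V l r vj \<and> lab2 u = 0 then 3 else lab2 u))"

text \<open>Final labeling: each round labels at least one new vertex, so card V rounds suffice
  (further rounds leave a complete labeling unchanged).\<close>
definition final_label :: "'a set \<Rightarrow> ('a \<Rightarrow> real) \<Rightarrow> ('a \<Rightarrow> real) \<Rightarrow> 'a \<Rightarrow> nat" where
  "final_label V l r = (label_step V l r ^^ card V) (\<lambda>_. 0)"

definition V2 :: "'a set \<Rightarrow> ('a \<Rightarrow> real) \<Rightarrow> ('a \<Rightarrow> real) \<Rightarrow> 'a set" where
  "V2 V l r = {v \<in> V. final_label V l r v = 2}"

text \<open>C-sets, 0-indexed: C V r ws i corresponds to the paper's C_{i+1}, where ws lists V2 by
  increasing r.\<close>
definition Cset :: "'a set \<Rightarrow> ('a \<Rightarrow> real) \<Rightarrow> 'a list \<Rightarrow> nat \<Rightarrow> 'a set" where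
  "Cset V r ws i =
    (if length ws = 1 then V
     else if i = 0 then {v \<in> V. r v \<le> r (ws ! 0)}
     else if i = length ws - 1 then {v \<in> V. r (ws ! (i - 1)) < r v}
     else {v \<in> V. r (ws ! (i - 1)) < r v \<and> r v \<le> r (ws ! i)})"

end

theory Submission
  imports Defs
begin

lemma adj_sym: "adj l r u v = adj l r v u" unfolding adj_def by auto

lemma ex1_min:
  assumes "finite S" "S \<noteq> {}" "inj_on (r::'a\<Rightarrow>real) S"
  shows "\<exists>!v. v \<in> S \<and> (\<forall>u\<in>S. r v \<le> r u)"
proof -
  have "Min (r ` S) \<in> r ` S" using assms by simp
  then obtain v where v: "v \<in> S" "r v = Min (r ` S)" by auto
  have m: "\<forall>u\<in>S. r v \<le> r u" using v assms by auto
  moreover have "w = v" if "w\<in>S" "\<forall>u\<in>S. r w \<le> r u" for w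
  proof -
    have "r w = r v" using that m v by (meson antisym)
    thus ?thesis using assms(3) that v by (meson inj_onD)
  qed
  ultimately show ?thesis using v by blast
qed

lemma ex1_max:
  assumes "finite S" "S \<noteq> {}" "inj_on (r::'a\<Rightarrow>real) S"
  shows "\<exists>!v. v \<in> S \<and> (\<forall>u\<in>S. r u \<le> r v)"
proof -
  have "Max (r ` S) \<in> r ` S" using assms by simp
  then obtain v where v: "v \<in> S" "r v = Max (r ` S)" by auto
  have m: "\<forall>u\<in>S. r u \<le> r v" using v assms by auto
  moreover have "w = v" if "w\<in>S" "\<forall>u\<in>S. r u \<le> r w" for w
  proof -
    have "r w = r v" using that m v by (meson antisym)
    thus ?thesis using assms(3) that v by (meson inj_onD)
  qed
  ultimately show ?thesis using v by blast
qed

locale ig =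
  fixes V :: "'a set" and l r :: "'a \<Rightarrow> real"
  assumes fin: "finite V" and lr: "\<forall>v\<in>V. l v \<le> r v" and inj: "inj_on r V"
begin

definition U :: "('a \<Rightarrow> nat) \<Rightarrow> 'a set" where "U lab = {v\<in>V. lab v = 0}"
definition S2 :: "('a \<Rightarrow> nat) \<Rightarrow> 'a set" where "S2 lab = {v\<in>V. lab v = 2}"
abbreviation "N \<equiv> closed_nbhd V l r"

definition Inv :: "('a \<Rightarrow> nat) \<Rightarrow> bool" where
"Inv lab \<longleftrightarrow> (\<forall>v\<in>V. lab v \<noteq> 0 \<longrightarrow> lab v = 2 \<or> (\<exists>u\<in>V. lab u = 2 \<and> adj l r u v)) \<and>
 (\<forall>v\<in>U lab. \<forall>b\<in>S2 lab. r b < l v) \<and>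
 (\<forall>b\<in>S2 lab. \<exists>a\<in>V. b \<in> N a \<and> (\<forall>u\<in>N a. r u \<le> r b \<and> (\<forall>b'\<in>S2 lab. r b' < r b \<longrightarrow> r b' < r u)))"

lemma step_shape:
  assumes "U lab \<noteq> {}"
  shows "\<exists>a b. a \<in> U lab \<and> (\<forall>u\<in>U lab. r a \<le> r u) \<and> b \<in> N a \<and> (\<forall>u\<in>N a. r u \<le> r b) \<and>
    label_step V l r lab = (\<lambda>u. if u \<in> open_nbhd V l r b \<and> (lab(a:=1,b:=2)) u = 0 then 3 else (lab(a:=1,b:=2)) u)"
proof -
  define a where "a = (THE v. v \<in> U lab \<and> (\<forall>u\<in>U lab. r v \<le> r u))"
  have Ufin: "finite (U lab)" and Usub: "U lab \<subseteq> V" using fin by (auto simp: U_def)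
  have ha: "a \<in> U lab \<and> (\<forall>u\<in>U lab. r a \<le> r u)" unfolding a_def
    by (rule theI') (rule ex1_min[OF Ufin assms inj_on_subset[OF inj Usub]])
  have aV: "a \<in> V" using ha Usub by auto
  have Nfin: "finite (N a)" "N a \<noteq> {}" "N a \<subseteq> V" using fin aV
    by (auto simp: closed_nbhd_def)
  define b where "b = (THE v. v \<in> N a \<and> (\<forall>u\<in>N a. r u \<le> r v))"
  have hb: "b \<in> N a \<and> (\<forall>u\<in>N a. r u \<le> r b)" unfolding b_def
    by (rule theI') (rule ex1_max[OF Nfin(1,2) inj_on_subset[OF inj Nfin(3)]])
  have "label_step V l r lab = (\<lambda>u. if u \<in> open_nbhd V l r b \<and> (lab(a:=1,b:=2)) u = 0 then 3 else (lab(a:=1,b:=2)) u)"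
    using assms unfolding label_step_def Let_def U_def[symmetric] a_def[symmetric] b_def[symmetric]
    by simp
  thus ?thesis using ha hb by blast
qed

lemma step_core:
  assumes I: "Inv lab" and aU: "a \<in> U lab" and amin: "\<forall>u\<in>U lab. r a \<le> r u"
    and bN: "b \<in> N a" and bmax: "\<forall>u\<in>N a. r u \<le> r b"
    and L: "lab' = (\<lambda>u. if u \<in> open_nbhd V l r b \<and> (lab(a:=1,b:=2)) u = 0 then 3 else (lab(a:=1,b:=2)) u)"
  shows "Inv lab'" "U lab' \<subset> U lab"
proof -
  have aV: "a \<in> V" and laba: "lab a = 0" using aU by (auto simp: U_def)
  have bV: "b \<in> V" and ba: "b = a \<or> adj l r b a" using bN by (auto simp: closed_nbhd_def)
  have F1: "lab' v = 2 \<longleftrightarrow> (v = b \<or> lab v = 2)" if "v \<in> V" for v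
    using laba unfolding L open_nbhd_def by auto
  have F2: "lab' v = 0 \<longleftrightarrow> (lab v = 0 \<and> v \<noteq> a \<and> v \<noteq> b \<and> \<not> adj l r v b)" if "v \<in> V" for v
    using that unfolding L open_nbhd_def by auto
  have S2': "S2 lab' = insert b (S2 lab)" using F1 bV by (auto simp: S2_def)
  have U': "U lab' = {v\<in>U lab. v \<noteq> a \<and> v \<noteq> b \<and> \<not> adj l r v b}" using F2 by (auto simp: U_def)
  have laa: "l a \<le> r a" using lr aV by auto
  have lba: "l b \<le> r a" using ba lr bV unfolding adj_def by auto
  have rab: "r a \<le> r b" using bmax aV by (auto simp: closed_nbhd_def)
  have old_lt: "r b'' < l a" if "b'' \<in> S2 lab" for b''
    using I aU that by (auto simp: Inv_def)
  have IA: "\<forall>v\<in>V. lab v \<noteq> 0 \<longrightarrow> lab v = 2 \<or> (\<exists>u\<in>V. lab u = 2 \<and> adj l r u v)"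
    and IB: "\<forall>v\<in>U lab. \<forall>b\<in>S2 lab. r b < l v"
    and IC: "\<forall>b\<in>S2 lab. \<exists>a\<in>V. b \<in> N a \<and> (\<forall>u\<in>N a. r u \<le> r b \<and> (\<forall>b'\<in>S2 lab. r b' < r b \<longrightarrow> r b' < r u))"
    using I unfolding Inv_def by blast+
  have A: "\<forall>v\<in>V. lab' v \<noteq> 0 \<longrightarrow> lab' v = 2 \<or> (\<exists>u\<in>V. lab' u = 2 \<and> adj l r u v)"
  proof (intro ballI impI)
    fix v assume vV: "v \<in> V" and nz: "lab' v \<noteq> 0"
    show "lab' v = 2 \<or> (\<exists>u\<in>V. lab' u = 2 \<and> adj l r u v)"
    proof (cases "v = b \<or> lab v = 2")
      case True thus ?thesis using F1 vV by blast
    next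
      case False
      hence vb: "v \<noteq> b" "lab v \<noteq> 2" by auto
      show ?thesis
      proof (cases "lab v = 0")
        case False
        then obtain u where "u \<in> V" "lab u = 2" "adj l r u v" using IA vV vb by blast
        thus ?thesis using F1 by blast
      next
        case True
        hence "v = a \<or> adj l r v b" using F2[OF vV] nz vb by auto
        hence "adj l r b v" using ba vb adj_sym by metis
        thus ?thesis using F1[OF bV] bV by blast
      qed
    qed
  qed
  have B: "\<forall>v\<in>U lab'. \<forall>b'\<in>S2 lab'. r b' < l v"
  proof (intro ballI)
    fix v b' assume v: "v \<in> U lab'" and b': "b' \<in> S2 lab'"
    have vU: "v \<in> U lab" and vab: "v \<noteq> b" "\<not> adj l r v b" using v U' by auto
    show "r b' < l v"
    proof (cases "b' = b")
      case True
      have "r a \<le> r v" using amin vU by auto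
      thus ?thesis using True vab lba unfolding adj_def by auto
    next
      case False
      thus ?thesis using b' S2' IB vU by auto
    qed
  qed
  have C: "\<forall>b'\<in>S2 lab'. \<exists>a\<in>V. b' \<in> N a \<and> (\<forall>u\<in>N a. r u \<le> r b' \<and> (\<forall>b''\<in>S2 lab'. r b'' < r b' \<longrightarrow> r b'' < r u))"
  proof
    fix b' assume b': "b' \<in> S2 lab'"
    show "\<exists>a\<in>V. b' \<in> N a \<and> (\<forall>u\<in>N a. r u \<le> r b' \<and> (\<forall>b''\<in>S2 lab'. r b'' < r b' \<longrightarrow> r b'' < r u))"
    proof (cases "b' = b")
      case True
      have "\<forall>u\<in>N a. r u \<le> r b' \<and> (\<forall>b''\<in>S2 lab'. r b'' < r b' \<longrightarrow> r b'' < r u)"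
      proof (intro ballI conjI impI)
        fix u assume u: "u \<in> N a"
        show "r u \<le> r b'" using bmax u True by auto
        fix b'' assume "b'' \<in> S2 lab'" "r b'' < r b'"
        hence "b'' \<in> S2 lab" using S2' True by auto
        hence "r b'' < l a" by (rule old_lt)
        moreover have "l a \<le> r u" using u laa unfolding closed_nbhd_def adj_def by auto
        ultimately show "r b'' < r u" by simp
      qed
      thus ?thesis using aV bN True by blast
    next
      case False
      hence b'o: "b' \<in> S2 lab" using b' S2' by auto
      then obtain a' where a': "a' \<in> V" "b' \<in> N a'"
        "\<forall>u\<in>N a'. r u \<le> r b' \<and> (\<forall>b''\<in>S2 lab. r b'' < r b' \<longrightarrow> r b'' < r u)"
        using IC by blast
      have "r b' < r b" using old_lt[OF b'o] laa rab by simp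
      hence "\<forall>u\<in>N a'. r u \<le> r b' \<and> (\<forall>b''\<in>S2 lab'. r b'' < r b' \<longrightarrow> r b'' < r u)"
        using a'(3) S2' by auto
      thus ?thesis using a' by blast
    qed
  qed
  show "Inv lab'" unfolding Inv_def using A B C by blast
  show "U lab' \<subset> U lab" using U' aU by auto
qed

lemma iter:
  "t \<le> card V \<Longrightarrow> Inv ((label_step V l r ^^ t) (\<lambda>_. 0)) \<and> card (U ((label_step V l r ^^ t) (\<lambda>_. 0))) \<le> card V - t"
proof (induction t)
  case 0
  have "S2 (\<lambda>_. 0) = {}" by (simp add: S2_def)
  hence "Inv (\<lambda>_. 0)" by (simp add: Inv_def)
  moreover have "card (U (\<lambda>_. 0)) \<le> card V" using fin by (auto simp: U_def intro: card_mono)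
  ultimately show ?case by simp
next
  case (Suc t)
  define lab where "lab = (label_step V l r ^^ t) (\<lambda>_. 0)"
  have IH: "Inv lab" "card (U lab) \<le> card V - t" using Suc lab_def by auto
  have eq: "(label_step V l r ^^ Suc t) (\<lambda>_. 0) = label_step V l r lab" by (simp add: lab_def)
  show ?case
  proof (cases "U lab = {}")
    case True
    hence "label_step V l r lab = lab" unfolding label_step_def Let_def U_def[symmetric] by simp
    thus ?thesis using IH True eq by simp
  next
    case False
    then obtain a b where ab: "a \<in> U lab" "\<forall>u\<in>U lab. r a \<le> r u" "b \<in> N a" "\<forall>u\<in>N a. r u \<le> r b"
      "label_step V l r lab = (\<lambda>u. if u \<in> open_nbhd V l r b \<and> (lab(a:=1,b:=2)) u = 0 then 3 else (lab(a:=1,b:=2)) u)"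
      using step_shape by blast
    note c = step_core[OF IH(1) ab]
    have "finite (U lab)" using fin by (auto simp: U_def)
    hence "card (U (label_step V l r lab)) < card (U lab)" using c(2) psubset_card_mono by blast
    thus ?thesis using c(1) IH(2) eq Suc.prems by simp
  qed
qed

lemma final: "Inv (final_label V l r) \<and> U (final_label V l r) = {}"
proof -
  have h: "Inv (final_label V l r) \<and> card (U (final_label V l r)) \<le> 0"
    using iter[of "card V"] unfolding final_label_def by simp
  have "finite (U (final_label V l r))" using fin by (auto simp: U_def)
  thus ?thesis using h by simp
qed

end

theorem lemma12:
  fixes V :: "'a set" and l r :: "'a \<Rightarrow> real" and ws :: "'a list"
  assumes "finite V"
    and "\<forall>v\<in>V. l v \<le> r v"
    and "inj_on r V"
    and "connected_graph V l r"
    and "set ws = V2 V l r"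
    and "sorted_wrt (\<lambda>a b. r a < r b) ws"
  shows "(\<forall>D. dominating V l r D \<longrightarrow> (\<forall>i < length ws. card (D \<inter> Cset V r ws i) \<ge> 1))
         \<and> min_dominating V l r (V2 V l r)"
proof -
  interpret ig V l r using assms(1-3) by unfold_locales
  define L where "L = final_label V l r"
  have IL: "Inv L" and UL: "U L = {}" using final unfolding L_def by auto
  have V2eq: "V2 V l r = S2 L" by (simp add: V2_def S2_def L_def)
  have ws_in: "ws!i \<in> S2 L" if "i < length ws" for i
    using assms(5) V2eq nth_mem[OF that] by auto
  have sorted_lt: "r (ws!i) < r (ws!j)" if "i < j" "j < length ws" for i j
    using sorted_wrt_nth_less[OF assms(6) that] by simp
  have hit: "\<exists>u\<in>D. u \<in> Cset V r ws i" if D: "dominating V l r D" and i: "i < length ws" for D i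
  proof -
    obtain a where aV: "a\<in>V" and P: "\<forall>u\<in>N a. r u \<le> r (ws!i) \<and> (\<forall>b'\<in>S2 L. r b' < r (ws!i) \<longrightarrow> r b' < r u)"
      using IL ws_in[OF i] unfolding Inv_def by blast
    obtain u where uD: "u\<in>D" and uN: "u \<in> N a" using D aV unfolding dominating_def closed_nbhd_def by blast
    have uV: "u \<in> V" using uN by (simp add: closed_nbhd_def)
    have r1: "r u \<le> r (ws!i)" using P uN by auto
    have r2: "r (ws!(i-1)) < r u" if "i > 0"
    proof -
      have "r (ws!(i-1)) < r (ws!i)" using sorted_lt[of "i-1" i] that i by simp
      moreover have "ws!(i-1) \<in> S2 L" using ws_in i by simp
      ultimately show ?thesis using P uN by blast
    qed
    have "u \<in> Cset V r ws i" unfolding Cset_def using r1 r2 uV i by auto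
    thus ?thesis using uD by blast
  qed
  have part1: "\<forall>D. dominating V l r D \<longrightarrow> (\<forall>i < length ws. card (D \<inter> Cset V r ws i) \<ge> 1)"
  proof (intro allI impI)
    fix D i assume D: "dominating V l r D" and i: "i < length ws"
    have "finite (D \<inter> Cset V r ws i)" using D assms(1) unfolding dominating_def
      by (meson finite_Int finite_subset)
    moreover have "D \<inter> Cset V r ws i \<noteq> {}" using hit[OF D i] by blast
    ultimately show "card (D \<inter> Cset V r ws i) \<ge> 1" by (simp add: Suc_le_eq card_gt_0_iff)
  qed
  have disj: "Cset V r ws i \<inter> Cset V r ws j = {}" if "i < j" "j < length ws" for i j
  proof -
    have n1: "length ws \<noteq> 1" using that by auto
    have "r v \<le> r (ws!i)" if "v \<in> Cset V r ws i" for v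
      using that n1 \<open>i<j\<close> \<open>j < length ws\<close> unfolding Cset_def by (auto split: if_splits)
    moreover have "r (ws!(j-1)) < r v" if "v \<in> Cset V r ws j" for v
      using that n1 \<open>i<j\<close> \<open>j < length ws\<close> unfolding Cset_def by (auto split: if_splits)
    moreover have "r (ws!i) \<le> r (ws!(j-1))"
    proof (cases "i = j-1")
      case False
      hence "i < j-1" "j-1 < length ws" using that by auto
      thus ?thesis using sorted_lt[of i "j-1"] by simp
    qed simp
    ultimately show ?thesis by force
  qed
  have dom: "dominating V l r (V2 V l r)"
  proof -
    have "\<forall>v\<in>V. L v \<noteq> 0" using UL by (auto simp: U_def)
    thus ?thesis using IL unfolding Inv_def dominating_def V2eq S2_def by auto
  qed
  have dist: "distinct ws"
    unfolding distinct_conv_nth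
  proof (intro allI impI)
    fix i j assume "i < length ws" "j < length ws" "i \<noteq> j"
    thus "ws!i \<noteq> ws!j" using sorted_lt[of i j] sorted_lt[of j i] by (cases "i < j") auto
  qed
  have cardV2: "card (V2 V l r) = length ws" using distinct_card[OF dist] assms(5) by simp
  have "card (V2 V l r) \<le> card D'" if D': "dominating V l r D'" for D'
  proof -
    define f where "f i = (SOME u. u \<in> D' \<and> u \<in> Cset V r ws i)" for i
    have fi: "f i \<in> D' \<and> f i \<in> Cset V r ws i" if "i < length ws" for i
      unfolding f_def using hit[OF D' that] by (metis (mono_tags, lifting) someI_ex)
    have "inj_on f {..<length ws}"
    proof (rule inj_onI)
      fix i j assume i: "i \<in> {..<length ws}" and j: "j \<in> {..<length ws}" and e: "f i = f j"
      show "i = j"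
      proof (rule ccontr)
        assume "i \<noteq> j"
        hence "i < j \<or> j < i" by auto
        thus False using disj fi i j e by (metis Int_iff emptyE lessThan_iff)
      qed
    qed
    moreover have "f ` {..<length ws} \<subseteq> D'" using fi by auto
    moreover have "finite D'" using D' assms(1) unfolding dominating_def by (meson finite_subset)
    ultimately have "card {..<length ws} \<le> card D'" by (rule card_inj_on_le)
    thus ?thesis using cardV2 by simp
  qed
  thus ?thesis using part1 dom unfolding min_dominating_def by blast
qed

end
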